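(* Let $e_0,\dots,e_\eta$ be a fuzzy derivation of $e_\eta$ from $e_0$ using the fuzzy rule base $B$, and assume every value $e_\kappa(X)(u)$ ($\kappa\le\eta$, $X\in\mathbb X$, $u\in\mathbb U$) lies in $C$. Then $$T_D\cup S_U\cup S_{\mathbb A}\cup T_B\cup S_{e_0}(\tau/\tilde z)\models_{\mathcal K} S_{e_\eta}(\tau/\tilde s^{\eta}(\tilde z)).$$
   Context: Fuzzy rules. Let $\mathbb U$ be a nonempty countable set; a fuzzy set over $\mathbb U$ is a map $\mathbb U\to[0,1]$. $\mathrm{height}(A)=\sup_{u\in\mathbb U}A(u)$; $\mathrm{cut}(c,A)(u)=\min(c,A(u))$; $(A_1\cap A_2)(u)=\min(A_1(u),A_2(u))$; the union of a finite family of fuzzy sets is the pointwise maximum (the empty union is the constant $0$). Let $\mathbb A$ be a nonempty finite set of fuzzy sets over $\mathbb U$ and $\mathbb X$ a nonempty finite set of variables. A fuzzy rule $r$ is an expression "IF $X_0$ is $A_0$ and $\dots$ and $X_n$ is $A_n$ THEN $X$ is $A$" with $X_i,X\in\mathbb X$, $A_i,A\in\mathbb A$; $\mathrm{out}(r)=X$. A fuzzy rule base $B$ is a nonempty finite set of fuzzy rules. A fuzzy variable assignment is a map $e$ from $\mathbb X$ to fuzzy sets over $\mathbb U$. $\|X\|^r_e=\mathrm{cut}(\min_{i\le n}\mathrm{height}(e(X_i)\cap A_i),A)$ and $\|X\|^B_e=\bigcup\{\|X\|^r_e: r\in B,\mathrm{out}(r)=X\}$. A fuzzy derivation of $e_\eta$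 from $e_0$ using $B$ is a sequence $e_0,\dots,e_\eta$ of fuzzy variable assignments with $e_\kappa(X)=\|X\|^B_{e_{\kappa-1}}$ for all $1\le\kappa\le\eta$, $X\in\mathbb X$. Gödel logic: formulae with truth constants $\bar c$ ($c\in C$, $C\subseteq[0,1]$ countable), connectives $\wedge(=\min),\vee(=\max)$, $\to$ ($\|\varphi\to\psi\|=1$ if $\|\varphi\|\le\|\psi\|$ else $\|\psi\|$), $\leftrightarrow$ ($\min$ of both implications), $\eqcirc$ (value $1$ if the two values are equal, else $0$), quantifiers $\forall=\inf$, $\exists=\sup$; predicates are $[0,1]$-valued; $\mathcal I\models\varphi$ iff $\varphi$ has value $1$ under every variable assignment. An order clause is a finite set of literals $\varepsilon_1\eqcirc\varepsilon_2$ or $\varepsilon_1\prec\varepsilon_2$ (the latter has value $1$ iff the value of $\varepsilon_1$ is $<$ that of $\varepsilon_2$), true under an assignment if some literal has value 1; a model of a set of clauses/formulae satisfies each under all assignments. Truth-constant convention: $C\supseteq\{0,1\}\cup\bigcup_{A\in\mathbb A}A[\mathbb U]\cup\bigcup_{X}e_0(X)[\mathbb U]$. Encoding. Let $\mathcal L^*$ be a countable first-order language containing (pairwise distinct) a constant $\tilde z$, a unary function symbol $\tilde s$, binary function symbols $\mathit{frac}$, $\mathit{{-}frac}$, unary predicates $\mathit{nat},\mathit{rat},\mathit{time},\mathit{uni}$, a unary predicate $\tilde G_A$ for each $A\in\mathbb A$, binary predicates $\tilde H_X$ ($X\in\mathbb X$) and $\tilde H^r_X$ ($r\in B$, $\mathrm{out}(r)=X$).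 A natural numeral is $\tilde s^n(\tilde z)$. A rational numeral is $\mathit{frac}(\tilde s^m(\tilde z),\tilde s^n(\tilde z))$ with $n>0$ (value $m/n$) or $\mathit{{-}frac}(\tilde s^m(\tilde z),\tilde s^n(\tilde z))$ with $m,n>0$ (value $-m/n$). Fix an injection $\gamma:\mathbb U\to\mathbb Q$ and a set $\tilde{\mathbb U}$ of rational numerals with $\{\|\tilde u\|:\tilde u\in\tilde{\mathbb U}\}=\gamma[\mathbb U]$; $\langle\tilde u\rangle=\gamma^{-1}(\|\tilde u\|)\in\mathbb U$. $\mathcal K$ is the class of interpretations $\mathcal I$ for $\mathcal L^*$ whose universe is the set of ground terms of $\mathcal L^*$ and in which every function symbol is interpreted by term formation ($f^{\mathcal I}(t_1,\dots,t_m)=f(t_1,\dots,t_m)$); predicates are arbitrary. $\Gamma\models_{\mathcal K}\Phi$ means every $\mathcal I\in\mathcal K$ with $\mathcal I\models\Gamma$ satisfies $\mathcal I\models\Phi$. $T_D=\{\mathit{nat}(\tilde z),\ \mathit{nat}(\tilde s(x))\leftrightarrow\mathit{nat}(x),\ \mathit{rat}(\mathit{frac}(x,\tilde s(y)))\leftrightarrow\mathit{nat}(x)\wedge\mathit{nat}(y),\ \mathit{rat}(\mathit{{-}frac}(\tilde s(x),\tilde s(y)))\leftrightarrow\mathit{nat}(x)\wedge\mathit{nat}(y)\}\cup\{\mathit{nat}(f(x_1,\dots,x_m))\eqcirc\bar0: f\notin\{\tilde z,\tilde s\}\}\cup\{\mathit{rat}(f(x_1,\dots,x_m))\eqcirc\bar0: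 f\notin\{\mathit{frac},\mathit{{-}frac}\}\}\cup\{\mathit{time}(x)\leftrightarrow\mathit{nat}(x),\ \mathit{uni}(x)\to\mathit{rat}(x)\}$ ($f$ ranges over function symbols of $\mathcal L^*$, $m$ its arity, $x_i$ distinct variables). $S_U=\{\mathit{uni}(\tilde u)\eqcirc\bar1:\tilde u\in\tilde{\mathbb U}\}\cup\{\mathit{uni}(t)\eqcirc\bar0: t \text{ ground term of }\mathcal L^*,\ t\notin\tilde{\mathbb U}\}$. $S_{\mathbb A}=\{\tilde G_A(\tilde u)\eqcirc\overline{A(\langle\tilde u\rangle)}: A\in\mathbb A,\tilde u\in\tilde{\mathbb U}\}$. For a fuzzy variable assignment $e$: $S_e=\{\tilde H_X(\tau,\tilde u)\eqcirc\overline{e(X)(\langle\tilde u\rangle)}: X\in\mathbb X,\tilde u\in\tilde{\mathbb U}\}$ with $\tau$ a variable; $S_e(\tau/t)$ is its instance with $\tau$ replaced by the ground term $t$. For the rule $r$ above: $\varphi_r(\tau,y)=\mathit{time}(\tau)\wedge\mathit{uni}(y)\to\big(\tilde H^r_X(\tilde s(\tau),y)\eqcirc((\bigwedge_{i=0}^n\exists x\,(\mathit{uni}(x)\wedge\tilde H_{X_i}(\tau,x)\wedge\tilde G_{A_i}(x)))\wedge\tilde G_A(y))\big)$. $T_B=\{\varphi_r(\tau,y): r\in B\}\cup\{\mathit{time}(\tau)\wedge\mathit{uni}(y)\to(\tilde H_X(\tilde s(\tau),y)\eqcirc\bigvee_{r\in B,\mathrm{out}(r)=X}\tilde H^r_X(\tilde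 s(\tau),y)): X\in\mathbb X\}$ (an empty disjunction is $\bar0$). *)

theory Defs
  imports Complex_Main "HOL-Library.Countable" "HOL-Library.Countable_Set"
begin

text \<open>The universe U is the (countable, nonempty) type 'u; the variable set X is the
  (finite, nonempty) type 'x.  A fuzzy set is a map 'u => real with values in [0,1].\<close>

definition fuzzy_set :: "('u \<Rightarrow> real) \<Rightarrow> bool" where
  "fuzzy_set A \<longleftrightarrow> (\<forall>u. 0 \<le> A u \<and> A u \<le> 1)"

definition height :: "('u \<Rightarrow> real) \<Rightarrow> real" where
  "height A = (SUP u. A u)"

definition cut :: "real \<Rightarrow> ('u \<Rightarrow> real) \<Rightarrow> ('u \<Rightarrow> real)" where
  "cut c A = (\<lambda>u. min c (A u))"

definition finter :: "('u \<Rightarrow> real) \<Rightarrow> ('u \<Rightarrow> real) \<Rightarrow> ('u \<Rightarrow> real)" where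
  "finter A1 A2 = (\<lambda>u. min (A1 u) (A2 u))"

definition funion :: "('u \<Rightarrow> real) set \<Rightarrow> ('u \<Rightarrow> real)" where
  "funion F = (\<lambda>u. if F = {} then 0 else Max ((\<lambda>A. A u) ` F))"

text \<open>A rule "IF X0 is A0 and ... and Xn is An THEN X is A": the antecedent list
  [(X0,A0),...,(Xn,An)] (nonempty), the output variable X and the output set A.\<close>
datatype ('x, 'u) rule = Rule "('x \<times> ('u \<Rightarrow> real)) list" 'x "'u \<Rightarrow> real"

fun ants :: "('x, 'u) rule \<Rightarrow> ('x \<times> ('u \<Rightarrow> real)) list" where
  "ants (Rule as X A) = as"
fun out :: "('x, 'u) rule \<Rightarrow> 'x" where
  "out (Rule as X A) = X"
fun conseq :: "('x, 'u) rule \<Rightarrow> ('u \<Rightarrow> real)" where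
  "conseq (Rule as X A) = A"

definition rule_ok :: "('u \<Rightarrow> real) set \<Rightarrow> ('x, 'u) rule \<Rightarrow> bool" where
  "rule_ok AA r \<longleftrightarrow> ants r \<noteq> [] \<and> (\<forall>(Xi, Ai) \<in> set (ants r). Ai \<in> AA) \<and> conseq r \<in> AA"

definition rule_base :: "('u \<Rightarrow> real) set \<Rightarrow> ('x, 'u) rule set \<Rightarrow> bool" where
  "rule_base AA B \<longleftrightarrow> finite B \<and> B \<noteq> {} \<and> (\<forall>r\<in>B. rule_ok AA r)"

definition fuzzy_assignment :: "('x \<Rightarrow> 'u \<Rightarrow> real) \<Rightarrow> bool" where
  "fuzzy_assignment e \<longleftrightarrow> (\<forall>X. fuzzy_set (e X))"

definition rule_val :: "('x, 'u) rule \<Rightarrow> ('x \<Rightarrow> 'u \<Rightarrow> real) \<Rightarrow> ('u \<Rightarrow> real)" where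
  "rule_val r e = cut (Min (set (map (\<lambda>(Xi, Ai). height (finter (e Xi) Ai)) (ants r)))) (conseq r)"

definition base_val :: "('x, 'u) rule set \<Rightarrow> ('x \<Rightarrow> 'u \<Rightarrow> real) \<Rightarrow> 'x \<Rightarrow> ('u \<Rightarrow> real)" where
  "base_val B e X = funion {rule_val r e | r. r \<in> B \<and> out r = X}"

text \<open>A fuzzy derivation e_0,...,e_eta (given as the first eta+1 values of es).\<close>
definition fuzzy_derivation :: "('x, 'u) rule set \<Rightarrow> (nat \<Rightarrow> 'x \<Rightarrow> 'u \<Rightarrow> real) \<Rightarrow> nat \<Rightarrow> bool" where
  "fuzzy_derivation B es \<eta> \<longleftrightarrow>
     (\<forall>\<kappa>\<le>\<eta>. fuzzy_assignment (es \<kappa>)) \<and>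
     (\<forall>\<kappa>. 1 \<le> \<kappa> \<and> \<kappa> \<le> \<eta> \<longrightarrow> (\<forall>X. es \<kappa> X = base_val B (es (\<kappa> - 1)) X))"

datatype 'f tm = V nat | Fn 'f "'f tm list"

record ('f, 'p, 'x, 'u) lang =
  farity :: "'f \<Rightarrow> nat"
  parity :: "'p \<Rightarrow> nat"
  zS :: 'f
  sS :: 'f
  fracS :: 'f
  nfracS :: 'f
  natP :: 'p
  ratP :: 'p
  timeP :: 'p
  uniP :: 'p
  GP :: "('u \<Rightarrow> real) \<Rightarrow> 'p"
  HP :: "'x \<Rightarrow> 'p"
  HrP :: "('x, 'u) rule \<Rightarrow> 'p"

definition lang_ok :: "('f, 'p, 'x, 'u) lang \<Rightarrow> ('u \<Rightarrow> real) set \<Rightarrow> ('x, 'u) rule set \<Rightarrow> bool" where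
  "lang_ok L AA B \<longleftrightarrow>
     distinct [zS L, sS L, fracS L, nfracS L] \<and>
     farity L (zS L) = 0 \<and> farity L (sS L) = 1 \<and> farity L (fracS L) = 2 \<and> farity L (nfracS L) = 2 \<and>
     distinct [natP L, ratP L, timeP L, uniP L] \<and>
     inj_on (GP L) AA \<and> inj (HP L) \<and> inj_on (HrP L) B \<and>
     {natP L, ratP L, timeP L, uniP L} \<inter> GP L ` AA = {} \<and>
     {natP L, ratP L, timeP L, uniP L} \<inter> range (HP L) = {} \<and>
     {natP L, ratP L, timeP L, uniP L} \<inter> HrP L ` B = {} \<and>
     GP L ` AA \<inter> range (HP L) = {} \<and> GP L ` AA \<inter> HrP L ` B = {} \<and> range (HP L) \<inter> HrP L ` B = {} \<and>
     parity L (natP L) = 1 \<and> parity L (ratP L) = 1 \<and> parity L (timeP L) = 1 \<and> parity L (uniP L) = 1 \<and>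
     (\<forall>A\<in>AA. parity L (GP L A) = 1) \<and> (\<forall>X. parity L (HP L X) = 2) \<and> (\<forall>r\<in>B. parity L (HrP L r) = 2)"

fun ground :: "('f, 'p, 'x, 'u) lang \<Rightarrow> 'f tm \<Rightarrow> bool" where
  "ground L (V n) = False"
| "ground L (Fn f ts) = (length ts = farity L f \<and> (\<forall>t\<in>set ts. ground L t))"

datatype ('f, 'p) form =
    TC real
  | Atm 'p "'f tm list"
  | Conj "('f, 'p) form" "('f, 'p) form"
  | Disj "('f, 'p) form" "('f, 'p) form"
  | Impl "('f, 'p) form" "('f, 'p) form"
  | Biimp "('f, 'p) form" "('f, 'p) form"
  | EqC "('f, 'p) form" "('f, 'p) form"
  | Forall nat "('f, 'p) form"
  | Exists nat "('f, 'p) form"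

text \<open>Terms are interpreted by term formation (interpretations in class K).\<close>
fun teval :: "(nat \<Rightarrow> 'f tm) \<Rightarrow> 'f tm \<Rightarrow> 'f tm" where
  "teval \<rho> (V n) = \<rho> n"
| "teval \<rho> (Fn f ts) = Fn f (map (teval \<rho>) ts)"

definition gimp :: "real \<Rightarrow> real \<Rightarrow> real" where
  "gimp a b = (if a \<le> b then 1 else b)"

fun fval :: "('f, 'p, 'x, 'u) lang \<Rightarrow> ('p \<Rightarrow> 'f tm list \<Rightarrow> real) \<Rightarrow> (nat \<Rightarrow> 'f tm) \<Rightarrow> ('f, 'p) form \<Rightarrow> real" where
  "fval L I \<rho> (TC c) = c"
| "fval L I \<rho> (Atm p ts) = I p (map (teval \<rho>) ts)"
| "fval L I \<rho> (Conj a b) = min (fval L I \<rho> a) (fval L I \<rho> b)"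
| "fval L I \<rho> (Disj a b) = max (fval L I \<rho> a) (fval L I \<rho> b)"
| "fval L I \<rho> (Impl a b) = gimp (fval L I \<rho> a) (fval L I \<rho> b)"
| "fval L I \<rho> (Biimp a b) = min (gimp (fval L I \<rho> a) (fval L I \<rho> b)) (gimp (fval L I \<rho> b) (fval L I \<rho> a))"
| "fval L I \<rho> (EqC a b) = (if fval L I \<rho> a = fval L I \<rho> b then 1 else 0)"
| "fval L I \<rho> (Forall x a) = (INF t\<in>{t. ground L t}. fval L I (\<rho>(x := t)) a)"
| "fval L I \<rho> (Exists x a) = (SUP t\<in>{t. ground L t}. fval L I (\<rho>(x := t)) a)"

text \<open>An interpretation of class K is determined by its [0,1]-valued predicates.\<close>
definition K_interp :: "('p \<Rightarrow> 'f tm list \<Rightarrow> real) \<Rightarrow> bool" where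
  "K_interp I \<longleftrightarrow> (\<forall>p ts. 0 \<le> I p ts \<and> I p ts \<le> 1)"

definition holds :: "('f, 'p, 'x, 'u) lang \<Rightarrow> ('p \<Rightarrow> 'f tm list \<Rightarrow> real) \<Rightarrow> ('f, 'p) form \<Rightarrow> bool" where
  "holds L I \<phi> \<longleftrightarrow> (\<forall>\<rho>. (\<forall>n. ground L (\<rho> n)) \<longrightarrow> fval L I \<rho> \<phi> = 1)"

definition entails_K :: "('f, 'p, 'x, 'u) lang \<Rightarrow> ('f, 'p) form set \<Rightarrow> ('f, 'p) form set \<Rightarrow> bool" where
  "entails_K L \<Gamma> \<Phi> \<longleftrightarrow>
     (\<forall>I. K_interp I \<longrightarrow> (\<forall>\<phi>\<in>\<Gamma>. holds L I \<phi>) \<longrightarrow> (\<forall>\<phi>\<in>\<Phi>. holds L I \<phi>))"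

fun bigConj :: "('f, 'p) form list \<Rightarrow> ('f, 'p) form" where
  "bigConj [] = TC 1"
| "bigConj [a] = a"
| "bigConj (a # as) = Conj a (bigConj as)"

fun bigDisj :: "('f, 'p) form list \<Rightarrow> ('f, 'p) form" where
  "bigDisj [] = TC 0"
| "bigDisj [a] = a"
| "bigDisj (a # as) = Disj a (bigDisj as)"

definition zt :: "('f, 'p, 'x, 'u) lang \<Rightarrow> 'f tm" where
  "zt L = Fn (zS L) []"

definition num :: "('f, 'p, 'x, 'u) lang \<Rightarrow> nat \<Rightarrow> 'f tm" where
  "num L n = ((\<lambda>t. Fn (sS L) [t]) ^^ n) (zt L)"

definition rat_numeral :: "('f, 'p, 'x, 'u) lang \<Rightarrow> 'f tm \<Rightarrow> bool" where
  "rat_numeral L t \<longleftrightarrow>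
     (\<exists>m n. 0 < n \<and> t = Fn (fracS L) [num L m, num L n]) \<or>
     (\<exists>m n. 0 < m \<and> 0 < n \<and> t = Fn (nfracS L) [num L m, num L n])"

definition ratval :: "('f, 'p, 'x, 'u) lang \<Rightarrow> 'f tm \<Rightarrow> rat" where
  "ratval L t = (THE q. \<exists>m n.
      (0 < n \<and> t = Fn (fracS L) [num L m, num L n] \<and> q = of_nat m / of_nat n) \<or>
      (0 < m \<and> 0 < n \<and> t = Fn (nfracS L) [num L m, num L n] \<and> q = - (of_nat m / of_nat n)))"

definition unb :: "('f, 'p, 'x, 'u) lang \<Rightarrow> ('u \<Rightarrow> rat) \<Rightarrow> 'f tm \<Rightarrow> 'u" where
  "unb L \<gamma> t = inv \<gamma> (ratval L t)"

text \<open>Variable names: x = 0, y = 1 in T_D; tau = 0, y = 1, x = 2 in T_B.\<close>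

definition T_D :: "('f, 'p, 'x, 'u) lang \<Rightarrow> ('f, 'p) form set" where
  "T_D L =
     {Atm (natP L) [zt L],
      Biimp (Atm (natP L) [Fn (sS L) [V 0]]) (Atm (natP L) [V 0]),
      Biimp (Atm (ratP L) [Fn (fracS L) [V 0, Fn (sS L) [V 1]]])
            (Conj (Atm (natP L) [V 0]) (Atm (natP L) [V 1])),
      Biimp (Atm (ratP L) [Fn (nfracS L) [Fn (sS L) [V 0], Fn (sS L) [V 1]]])
            (Conj (Atm (natP L) [V 0]) (Atm (natP L) [V 1]))}
   \<union> {EqC (Atm (natP L) [Fn f (map V [0..<farity L f])]) (TC 0) | f. f \<notin> {zS L, sS L}}
   \<union> {EqC (Atm (ratP L) [Fn f (map V [0..<farity L f])]) (TC 0) | f. f \<notin> {fracS L, nfracS L}}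
   \<union> {Biimp (Atm (timeP L) [V 0]) (Atm (natP L) [V 0]),
      Impl (Atm (uniP L) [V 0]) (Atm (ratP L) [V 0])}"

definition S_U :: "('f, 'p, 'x, 'u) lang \<Rightarrow> 'f tm set \<Rightarrow> ('f, 'p) form set" where
  "S_U L Ut =
     {EqC (Atm (uniP L) [u]) (TC 1) | u. u \<in> Ut}
   \<union> {EqC (Atm (uniP L) [t]) (TC 0) | t. ground L t \<and> t \<notin> Ut}"

definition S_A :: "('f, 'p, 'x, 'u) lang \<Rightarrow> ('u \<Rightarrow> real) set \<Rightarrow> 'f tm set \<Rightarrow> ('u \<Rightarrow> rat) \<Rightarrow> ('f, 'p) form set" where
  "S_A L AA Ut \<gamma> = {EqC (Atm (GP L A) [u]) (TC (A (unb L \<gamma> u))) | A u. A \<in> AA \<and> u \<in> Ut}"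

text \<open>S_e(tau/t): S_e with the variable tau replaced by the term t.\<close>
definition S_e :: "('f, 'p, 'x, 'u) lang \<Rightarrow> 'f tm set \<Rightarrow> ('u \<Rightarrow> rat) \<Rightarrow> ('x \<Rightarrow> 'u \<Rightarrow> real) \<Rightarrow> 'f tm \<Rightarrow> ('f, 'p) form set" where
  "S_e L Ut \<gamma> e t = {EqC (Atm (HP L X) [t, u]) (TC (e X (unb L \<gamma> u))) | X u. u \<in> Ut}"

definition phi_r :: "('f, 'p, 'x, 'u) lang \<Rightarrow> ('x, 'u) rule \<Rightarrow> ('f, 'p) form" where
  "phi_r L r =
     Impl (Conj (Atm (timeP L) [V 0]) (Atm (uniP L) [V 1]))
       (EqC (Atm (HrP L r) [Fn (sS L) [V 0], V 1])
            (Conj (bigConj (map (\<lambda>(Xi, Ai). Exists 2 (Conj (Atm (uniP L) [V 2])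
                                   (Conj (Atm (HP L Xi) [V 0, V 2]) (Atm (GP L Ai) [V 2])))) (ants r)))
                  (Atm (GP L (conseq r)) [V 1])))"

definition rules_list :: "('x, 'u) rule set \<Rightarrow> 'x \<Rightarrow> ('x, 'u) rule list" where
  "rules_list B X = (SOME rs. distinct rs \<and> set rs = {r \<in> B. out r = X})"

definition T_B :: "('f, 'p, 'x, 'u) lang \<Rightarrow> ('x, 'u) rule set \<Rightarrow> ('f, 'p) form set" where
  "T_B L B = {phi_r L r | r. r \<in> B}
   \<union> {Impl (Conj (Atm (timeP L) [V 0]) (Atm (uniP L) [V 1]))
        (EqC (Atm (HP L X) [Fn (sS L) [V 0], V 1])
             (bigDisj (map (\<lambda>r. Atm (HrP L r) [Fn (sS L) [V 0], V 1]) (rules_list B X)))) | X. True}"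

end

theory Submission
  imports Defs
begin

lemma teval_ground: "ground L t \<Longrightarrow> teval \<rho> t = t"
proof (induction t)
  case (V n) then show ?case by simp
next
  case (Fn f ts) then show ?case by (auto intro!: map_idI)
qed

lemma num_0: "num L 0 = zt L" by (simp add: num_def)
lemma num_Suc: "num L (Suc n) = Fn (sS L) [num L n]" by (simp add: num_def)

lemma ground_num: "lang_ok L AA B \<Longrightarrow> ground L (num L n)"
  by (induction n) (auto simp: num_0 num_Suc zt_def lang_ok_def)

lemma ground_rat: "lang_ok L AA B \<Longrightarrow> rat_numeral L t \<Longrightarrow> ground L t"
  unfolding rat_numeral_def using ground_num[of L AA B] by (auto simp: lang_ok_def)

lemma biimp1: "min (gimp a b) (gimp b a) = 1 \<Longrightarrow> a \<le> 1 \<Longrightarrow> b \<le> (1::real) \<Longrightarrow> a = b"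
  by (auto simp: gimp_def split: if_splits)

lemma impl1: "gimp 1 b = 1 \<Longrightarrow> b \<le> 1 \<Longrightarrow> b = (1::real)"
  by (auto simp: gimp_def split: if_splits)

lemma biimp_step: "fval L I \<rho> (Biimp a b) = 1 \<Longrightarrow> fval L I \<rho> a \<le> 1 \<Longrightarrow> fval L I \<rho> b \<le> 1
   \<Longrightarrow> fval L I \<rho> a = fval L I \<rho> b"
  by (auto simp: gimp_def split: if_splits)

lemma impl_step: "fval L I \<rho> (Impl (Conj a b) (EqC c d)) = 1 \<Longrightarrow> fval L I \<rho> a = 1 \<Longrightarrow> fval L I \<rho> b = 1
   \<Longrightarrow> fval L I \<rho> c = fval L I \<rho> d"
  by (auto simp: gimp_def split: if_splits)

lemma eq_step: "fval L I \<rho> (EqC a b) = 1 \<Longrightarrow> fval L I \<rho> a = fval L I \<rho> b"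
  by (auto split: if_splits)

lemma sup_lemma:
  fixes f :: "'a \<Rightarrow> real" and g :: "'b \<Rightarrow> real"
  assumes U: "U \<subseteq> G" and fU: "\<And>t. t \<in> U \<Longrightarrow> f t = g (h t)"
    and f0: "\<And>t. t \<in> G \<Longrightarrow> t \<notin> U \<Longrightarrow> f t = 0"
    and surj: "\<And>w. \<exists>t\<in>U. h t = w"
    and fb: "\<And>t. t \<in> G \<Longrightarrow> 0 \<le> f t \<and> f t \<le> 1"
  shows "(SUP t\<in>G. f t) = (SUP w. g w)"
proof -
  obtain t0 where t0: "t0 \<in> U" using surj by blast
  have gb: "0 \<le> g w \<and> g w \<le> 1" for w
    using surj[of w] fU fb U by force
  have bf: "bdd_above (f ` G)" using fb by (auto intro: bdd_aboveI[of _ 1])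
  have bg: "bdd_above (range g)" using gb by (auto intro: bdd_aboveI[of _ 1])
  have Gne: "G \<noteq> {}" using t0 U by auto
  show ?thesis
  proof (rule antisym)
    show "(SUP t\<in>G. f t) \<le> (SUP w. g w)"
    proof (rule cSUP_least[OF Gne])
      fix t assume t: "t \<in> G"
      show "f t \<le> (SUP w. g w)"
      proof (cases "t \<in> U")
        case True then show ?thesis using fU cSUP_upper[OF UNIV_I bg] by simp
      next
        case False
        then have "f t = 0" using f0 t by simp
        also have "0 \<le> g (h t0)" using gb by simp
        also have "\<dots> \<le> (SUP w. g w)" using cSUP_upper[OF UNIV_I bg] .
        finally show ?thesis .
      qed
    qed
  next
    show "(SUP w. g w) \<le> (SUP t\<in>G. f t)"
    proof (rule cSUP_least)
      show "(UNIV::'b set) \<noteq> {}" by simp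
      fix w
      obtain t where t: "t \<in> U" "h t = w" using surj by blast
      have "g w = f t" using fU t by simp
      also have "\<dots> \<le> (SUP t\<in>G. f t)" using cSUP_upper[OF _ bf] t U by auto
      finally show "g w \<le> (SUP t\<in>G. f t)" .
    qed
  qed
qed

lemma bigConj_val: "xs \<noteq> [] \<Longrightarrow> fval L I \<rho> (bigConj (map F xs)) = Min ((\<lambda>a. fval L I \<rho> (F a)) ` set xs)"
proof (induction xs)
  case Nil then show ?case by simp
next
  case (Cons a xs)
  show ?case
  proof (cases "xs = []")
    case True then show ?thesis by simp
  next
    case False
    then obtain b ys where "xs = b # ys" by (cases xs) auto
    then show ?thesis using Cons.IH[OF False] by simp
  qed
qed

lemma bigDisj_val: "fval L I \<rho> (bigDisj (map F xs)) = (if xs = [] then 0 else Max ((\<lambda>a. fval L I \<rho> (F a)) ` set xs))"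
proof (induction xs)
  case Nil then show ?case by simp
next
  case (Cons a xs)
  show ?case
  proof (cases "xs = []")
    case True then show ?thesis by simp
  next
    case False
    then obtain b ys where "xs = b # ys" by (cases xs) auto
    then show ?thesis using Cons.IH False by simp
  qed
qed

theorem lemma4:
  fixes L :: "('f::countable, 'p::countable, 'x::finite, 'u::countable) lang"
    and AA :: "('u \<Rightarrow> real) set"
    and B :: "('x, 'u) rule set"
    and es :: "nat \<Rightarrow> 'x \<Rightarrow> 'u \<Rightarrow> real"
    and \<eta> :: nat
    and C :: "real set"
    and \<gamma> :: "'u \<Rightarrow> rat"
    and Ut :: "'f tm set"
  assumes AA: "finite AA" "AA \<noteq> {}" "\<forall>A\<in>AA. fuzzy_set A"
    and B: "rule_base AA B"
    and L: "lang_ok L AA B"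
    and deriv: "fuzzy_derivation B es \<eta>"
    and C: "countable C" "C \<subseteq> {0..1}" "{0, 1} \<subseteq> C"
      "\<forall>A\<in>AA. range A \<subseteq> C" "\<forall>X. range (es 0 X) \<subseteq> C"
    and inC: "\<forall>\<kappa>\<le>\<eta>. \<forall>X u. es \<kappa> X u \<in> C"
    and \<gamma>: "inj \<gamma>"
    and Ut: "\<forall>t\<in>Ut. rat_numeral L t" "ratval L ` Ut = range \<gamma>"
  shows "entails_K L (T_D L \<union> S_U L Ut \<union> S_A L AA Ut \<gamma> \<union> T_B L B \<union> S_e L Ut \<gamma> (es 0) (zt L))
                     (S_e L Ut \<gamma> (es \<eta>) (num L \<eta>))"
  unfolding entails_K_def
proof (intro allI impI ballI)
  fix I \<phi>
  assume KI: "K_interp I"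
    and hyp: "\<forall>\<phi>\<in>T_D L \<union> S_U L Ut \<union> S_A L AA Ut \<gamma> \<union> T_B L B \<union> S_e L Ut \<gamma> (es 0) (zt L). holds L I \<phi>"
    and phi: "\<phi> \<in> S_e L Ut \<gamma> (es \<eta>) (num L \<eta>)"
  have bnd: "0 \<le> I p ts" "I p ts \<le> 1" for p ts using KI unfolding K_interp_def by auto
  define \<rho>0 where "\<rho>0 = (\<lambda>n::nat. zt L)"
  have gz: "ground L (zt L)" using L by (simp add: zt_def lang_ok_def)
  have g0: "\<forall>n. ground L (\<rho>0 n)" using gz by (simp add: \<rho>0_def)
  have H: "fval L I \<rho> \<psi> = 1" if "\<psi> \<in> T_D L \<union> S_U L Ut \<union> S_A L AA Ut \<gamma> \<union> T_B L B \<union> S_e L Ut \<gamma> (es 0) (zt L)"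
     "\<forall>n. ground L (\<rho> n)" for \<psi> \<rho>
    using hyp that holds_def by blast
  have gnum: "ground L (num L n)" for n using ground_num[OF L] .
  have gU: "ground L t" if "t \<in> Ut" for t using ground_rat[OF L] Ut(1) that by blast
  have gupd: "\<forall>n. ground L ((\<rho>0(0 := a, 1 := b)) n)" if "ground L a" "ground L b" for a b
    using that g0 by auto
  have nat1: "I (natP L) [num L n] = 1" for n
  proof (induction n)
    case 0
    have "fval L I \<rho>0 (Atm (natP L) [zt L]) = 1" by (rule H[OF _ g0]) (simp add: T_D_def)
    then show ?case by (simp add: teval_ground[OF gz] num_0)
  next
    case (Suc n)
    have "fval L I (\<rho>0(0:=num L n, 1 := num L n)) (Biimp (Atm (natP L) [Fn (sS L) [V 0]]) (Atm (natP L) [V 0])) = 1"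
      by (rule H[OF _ gupd[OF gnum gnum]]) (simp add: T_D_def)
    then have "fval L I (\<rho>0(0:=num L n, 1 := num L n)) (Atm (natP L) [Fn (sS L) [V 0]]) =
       fval L I (\<rho>0(0:=num L n, 1 := num L n)) (Atm (natP L) [V 0])"
      by (rule biimp_step) (simp_all add: bnd)
    then have "I (natP L) [num L (Suc n)] = I (natP L) [num L n]"
      by (simp add: num_Suc)
    then show ?case using Suc by simp
  qed
  have time1: "I (timeP L) [num L n] = 1" for n
  proof -
    have "fval L I (\<rho>0(0:=num L n, 1 := num L n)) (Biimp (Atm (timeP L) [V 0]) (Atm (natP L) [V 0])) = 1"
      by (rule H[OF _ gupd[OF gnum gnum]]) (simp add: T_D_def)
    then have "fval L I (\<rho>0(0:=num L n, 1 := num L n)) (Atm (timeP L) [V 0]) =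
       fval L I (\<rho>0(0:=num L n, 1 := num L n)) (Atm (natP L) [V 0])"
      by (rule biimp_step) (simp_all add: bnd)
    then show ?thesis using nat1[of n] by simp
  qed
  have uni1: "I (uniP L) [u] = 1" if "u \<in> Ut" for u
  proof -
    have "fval L I \<rho>0 (EqC (Atm (uniP L) [u]) (TC 1)) = 1"
      by (rule H[OF _ g0]) (use that in \<open>auto simp: S_U_def\<close>)
    then show ?thesis by (simp add: teval_ground[OF gU[OF that]] split: if_splits)
  qed
  have uni0: "I (uniP L) [t] = 0" if "ground L t" "t \<notin> Ut" for t
  proof -
    have "fval L I \<rho>0 (EqC (Atm (uniP L) [t]) (TC 0)) = 1"
      by (rule H[OF _ g0]) (use that in \<open>auto simp: S_U_def\<close>)
    then show ?thesis by (simp add: teval_ground[OF that(1)] split: if_splits)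
  qed
  have Gv: "I (GP L A) [u] = A (unb L \<gamma> u)" if "A \<in> AA" "u \<in> Ut" for A u
  proof -
    have "fval L I \<rho>0 (EqC (Atm (GP L A) [u]) (TC (A (unb L \<gamma> u)))) = 1"
      by (rule H[OF _ g0]) (use that in \<open>auto simp: S_A_def\<close>)
    then show ?thesis by (simp add: teval_ground[OF gU[OF that(2)]] split: if_splits)
  qed
  have Hbase: "I (HP L X) [num L 0, u] = es 0 X (unb L \<gamma> u)" if "u \<in> Ut" for X u
  proof -
    have "fval L I \<rho>0 (EqC (Atm (HP L X) [zt L, u]) (TC (es 0 X (unb L \<gamma> u)))) = 1"
      by (rule H[OF _ g0]) (use that in \<open>auto simp: S_e_def\<close>)
    then show ?thesis by (simp add: num_0 teval_ground[OF gU[OF that]] teval_ground[OF gz] split: if_splits)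
  qed
  have surj: "\<exists>t\<in>Ut. unb L \<gamma> t = w" for w
  proof -
    have "\<gamma> w \<in> ratval L ` Ut" using Ut(2) by simp
    then obtain t where t: "t \<in> Ut" "ratval L t = \<gamma> w" by auto
    have "unb L \<gamma> t = w" using t(2) \<gamma> by (simp add: unb_def)
    then show ?thesis using t(1) by blast
  qed
  have rl: "set (rules_list B X) = {r \<in> B. out r = X}" for X
  proof -
    have "finite {r \<in> B. out r = X}" using B by (simp add: rule_base_def)
    then obtain xs where "set xs = {r \<in> B. out r = X} \<and> distinct xs" using finite_distinct_list by blast
    then have "\<exists>rs. distinct rs \<and> set rs = {r \<in> B. out r = X}" by blast
    then show ?thesis unfolding rules_list_def by (rule someI2_ex) simp
  qed
  have main: "\<kappa> \<le> \<eta> \<Longrightarrow> \<forall>X. \<forall>u\<in>Ut. I (HP L X) [num L \<kappa>, u] = es \<kappa> X (unb L \<gamma> u)" for \<kappa>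
  proof (induction \<kappa>)
    case 0 then show ?case using Hbase by simp
  next
    case (Suc k)
    then have IH: "I (HP L X) [num L k, u] = es k X (unb L \<gamma> u)" if "u \<in> Ut" for X u
      using that by simp
    have step: "es (Suc k) X = base_val B (es k) X" for X
      using deriv Suc.prems unfolding fuzzy_derivation_def by auto
    show ?case
    proof (intro allI ballI)
      fix X u assume u: "u \<in> Ut"
      define \<rho> where "\<rho> = \<rho>0(0 := num L k, 1 := u)"
      have g\<rho>: "\<forall>n. ground L (\<rho> n)" unfolding \<rho>_def using gupd[OF gnum gU[OF u]] .
      have rv: "I (HrP L r) [Fn (sS L) [num L k], u] = rule_val r (es k) (unb L \<gamma> u)"
        if r: "r \<in> B" for r
      proof -
        have rok: "rule_ok AA r" using B r by (simp add: rule_base_def)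
        have "fval L I \<rho> (phi_r L r) = 1" by (rule H[OF _ g\<rho>]) (use r in \<open>auto simp: T_B_def\<close>)
        then have e0: "fval L I \<rho> (Atm (HrP L r) [Fn (sS L) [V 0], V 1]) =
          fval L I \<rho> (Conj (bigConj (map (\<lambda>(Xi, Ai). Exists 2 (Conj (Atm (uniP L) [V 2])
                                   (Conj (Atm (HP L Xi) [V 0, V 2]) (Atm (GP L Ai) [V 2])))) (ants r)))
                  (Atm (GP L (conseq r)) [V 1]))"
          unfolding phi_r_def
          by (rule impl_step) (simp_all add: \<rho>_def time1 uni1[OF u])
        moreover have "fval L I \<rho> (Atm (HrP L r) [Fn (sS L) [V 0], V 1]) = I (HrP L r) [Fn (sS L) [num L k], u]"
          by (simp add: \<rho>_def)
        ultimately have e1: "I (HrP L r) [Fn (sS L) [num L k], u] =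
          fval L I \<rho> (Conj (bigConj (map (\<lambda>(Xi, Ai). Exists 2 (Conj (Atm (uniP L) [V 2])
                                   (Conj (Atm (HP L Xi) [V 0, V 2]) (Atm (GP L Ai) [V 2])))) (ants r)))
                  (Atm (GP L (conseq r)) [V 1]))"
          by simp
        have ex: "fval L I \<rho> (Exists 2 (Conj (Atm (uniP L) [V 2])
                   (Conj (Atm (HP L Xi) [V 0, V 2]) (Atm (GP L Ai) [V 2])))) = height (finter (es k Xi) Ai)"
          if xa: "(Xi, Ai) \<in> set (ants r)" for Xi Ai
        proof -
          have Ai: "Ai \<in> AA" using rok xa unfolding rule_ok_def by auto
          have "(SUP t\<in>{t. ground L t}. fval L I (\<rho>(2 := t)) (Conj (Atm (uniP L) [V 2])
                   (Conj (Atm (HP L Xi) [V 0, V 2]) (Atm (GP L Ai) [V 2]))))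
                = (SUP w. finter (es k Xi) Ai w)"
          proof (rule sup_lemma[where U = Ut and h = "unb L \<gamma>"])
            show "Ut \<subseteq> {t. ground L t}" using gU by auto
            show "\<exists>t\<in>Ut. unb L \<gamma> t = w" for w using surj .
            fix t
            show "fval L I (\<rho>(2 := t)) (Conj (Atm (uniP L) [V 2])
                   (Conj (Atm (HP L Xi) [V 0, V 2]) (Atm (GP L Ai) [V 2]))) = finter (es k Xi) Ai (unb L \<gamma> t)"
              if "t \<in> Ut"
              using uni1[OF that] IH[OF that, of Xi] Gv[OF Ai that] bnd(2)[of "HP L Xi" "[num L k, t]"] bnd(2)[of "GP L Ai" "[t]"]
              by (simp add: \<rho>_def finter_def)
            show "fval L I (\<rho>(2 := t)) (Conj (Atm (uniP L) [V 2])
                   (Conj (Atm (HP L Xi) [V 0, V 2]) (Atm (GP L Ai) [V 2]))) = 0"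
              if "t \<in> {t. ground L t}" "t \<notin> Ut"
              using uni0[of t] that bnd[of "HP L Xi"] bnd[of "GP L Ai"]
              by (simp add: \<rho>_def)
            show "0 \<le> fval L I (\<rho>(2 := t)) (Conj (Atm (uniP L) [V 2])
                   (Conj (Atm (HP L Xi) [V 0, V 2]) (Atm (GP L Ai) [V 2])))
                \<and> fval L I (\<rho>(2 := t)) (Conj (Atm (uniP L) [V 2])
                   (Conj (Atm (HP L Xi) [V 0, V 2]) (Atm (GP L Ai) [V 2]))) \<le> 1"
              using bnd(1)[of "uniP L" "[t]"] bnd(2)[of "uniP L" "[t]"] bnd(1)[of "HP L Xi" "[num L k, t]"] bnd(1)[of "GP L Ai" "[t]"]
              by (simp add: \<rho>_def)
          qed
          then show ?thesis by (simp add: height_def)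
        qed
        have ne: "ants r \<noteq> []" using rok by (simp add: rule_ok_def)
        have cA: "conseq r \<in> AA" using rok by (simp add: rule_ok_def)
        have "fval L I \<rho> (bigConj (map (\<lambda>(Xi, Ai). Exists 2 (Conj (Atm (uniP L) [V 2])
                                   (Conj (Atm (HP L Xi) [V 0, V 2]) (Atm (GP L Ai) [V 2])))) (ants r)))
              = Min ((\<lambda>(Xi, Ai). height (finter (es k Xi) Ai)) ` set (ants r))"
          unfolding bigConj_val[OF ne]
          by (intro arg_cong[where f = Min] image_cong refl) (auto simp del: fval.simps simp add: ex split: prod.split)
        then show ?thesis using e1 Gv[OF cA u]
          by (simp add: \<rho>_def rule_val_def cut_def)
      qed
      have "fval L I \<rho> (Impl (Conj (Atm (timeP L) [V 0]) (Atm (uniP L) [V 1]))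
        (EqC (Atm (HP L X) [Fn (sS L) [V 0], V 1])
             (bigDisj (map (\<lambda>r. Atm (HrP L r) [Fn (sS L) [V 0], V 1]) (rules_list B X))))) = 1"
        by (rule H[OF _ g\<rho>]) (auto simp: T_B_def)
      then have e2a: "I (HP L X) [Fn (sS L) [num L k], u] =
          fval L I \<rho> (bigDisj (map (\<lambda>r. Atm (HrP L r) [Fn (sS L) [V 0], V 1]) (rules_list B X)))"
      proof -
        have "fval L I \<rho> (Atm (HP L X) [Fn (sS L) [V 0], V 1]) =
          fval L I \<rho> (bigDisj (map (\<lambda>r. Atm (HrP L r) [Fn (sS L) [V 0], V 1]) (rules_list B X)))"
          using \<open>fval L I \<rho> (Impl _ _) = 1\<close> by (rule impl_step) (simp_all add: \<rho>_def time1 uni1[OF u])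
        moreover have "fval L I \<rho> (Atm (HP L X) [Fn (sS L) [V 0], V 1]) = I (HP L X) [Fn (sS L) [num L k], u]"
          by (simp add: \<rho>_def)
        ultimately show ?thesis by simp
      qed
      have e2: "I (HP L X) [Fn (sS L) [num L k], u] =
          fval L I \<rho> (bigDisj (map (\<lambda>r. Atm (HrP L r) [Fn (sS L) [V 0], V 1]) (rules_list B X)))"
        by (rule e2a)
      also have "\<dots> = (if rules_list B X = [] then 0 else
           Max ((\<lambda>r. rule_val r (es k) (unb L \<gamma> u)) ` {r \<in> B. out r = X}))"
        unfolding bigDisj_val rl
        by (auto simp: \<rho>_def rv intro!: arg_cong[where f = Max] image_cong)
      also have "\<dots> = base_val B (es k) X (unb L \<gamma> u)"
      proof -
        have "{rule_val r (es k) |r. r \<in> B \<and> out r = X} = (\<lambda>r. rule_val r (es k)) ` {r \<in> B. out r = X}"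
          by auto
        moreover have "(rules_list B X = []) = ({r \<in> B. out r = X} = {})"
          by (metis rl set_empty)
        ultimately show ?thesis
          by (auto simp add: base_val_def funion_def image_image)
      qed
      finally show "I (HP L X) [num L (Suc k), u] = es (Suc k) X (unb L \<gamma> u)"
        by (simp add: num_Suc step)
    qed
  qed
  from phi obtain X u where \<phi>: "\<phi> = EqC (Atm (HP L X) [num L \<eta>, u]) (TC (es \<eta> X (unb L \<gamma> u)))" "u \<in> Ut"
    by (auto simp: S_e_def)
  show "holds L I \<phi>"
    unfolding holds_def
  proof (intro allI impI)
    fix \<rho> :: "nat \<Rightarrow> 'f tm"
    show "fval L I \<rho> \<phi> = 1" using main[of \<eta>] \<phi>
      by (simp add: teval_ground[OF gnum] teval_ground[OF gU[OF \<phi>(2)]])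
  qed
qed

end
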